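(* Let $I$ be a finite set. The space $\mathcal{P}(\mathbf{k}\mathbf{SC})[I]$ of primitive elements of $\mathbf{k}\mathbf{SC}[I]$ has a basis consisting of the elements \[\omega^{\Gamma}=\sum_{\Phi\le\Gamma}\mu(\Phi,\Gamma)\,\Phi\] for connected $\Gamma\in\mathbf{SC}[I]$.
   Context: $\mathbf{k}$ is a field of characteristic $0$. A simplicial complex on a finite ground set $I$ is a downward closed collection $\Gamma\subseteq2^I$. $\mathbf{SC}[I]$ is the set of simplicial complexes on $I$, ordered by $\Phi\le\Gamma$ iff every $X\in\Phi$ lies in $\Gamma$; $\mu$ is the Möbius function of this poset; $\mathbf{k}\mathbf{SC}[I]$ is the vector space with basis $\mathbf{SC}[I]$. Multiplication: for $\Gamma_1$ on $S$, $\Gamma_2$ on $T$ disjoint, $m_{S,T}(\Gamma_1,\Gamma_2)=\Gamma_1\sqcup\Gamma_2=\{A\subseteq S\sqcup T:A\in\Gamma_1\text{ or }A\in\Gamma_2\}$. Comultiplication: $\Delta_{S,T}(\Gamma)=\Gamma|S\otimes\Gamma|T$ with $\Gamma|S=\Gamma\cap2^S$. An element $p\in\mathbf{k}\mathbf{SC}[I]$ is primitive if $\Delta_{S,T}(p)=0$ for all $I=S\sqcup T$ with $S,T$ nonempty. $\Gamma\in\mathbf{SC}[I]$ is connected if it cannot be written as $\Gamma_1\sqcup\Gamma_2$ with $\Gamma_1\in\mathbf{SC}[S]$, $\Gamma_2\in\mathbf{SC}[T]$, $I=S\sqcup T$, $S,T$ nonempty. *)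

theory Defs
  imports Main "HOL.Modules" "HOL-Library.Function_Algebras"
begin

definition SC :: "'a set \<Rightarrow> 'a set set set" where
  "SC I = {\<Gamma>. \<Gamma> \<subseteq> Pow I \<and> (\<forall>X\<in>\<Gamma>. \<forall>Y. Y \<subseteq> X \<longrightarrow> Y \<in> \<Gamma>)}"

definition restr :: "'a set set \<Rightarrow> 'a set \<Rightarrow> 'a set set" where
  "restr \<Gamma> S = \<Gamma> \<inter> Pow S"

text \<open>The recursion is run with a fuel parameter; fuel card P suffices
  since every chain in P has fewer than card P steps.\<close>
fun mobius_aux :: "'c set set \<Rightarrow> nat \<Rightarrow> 'c set \<Rightarrow> 'c set \<Rightarrow> 'k::ring_1" where
  "mobius_aux P 0 x y = (if x = y then 1 else 0)"
| "mobius_aux P (Suc n) x y =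
     (if x = y then 1
      else if x \<subseteq> y then - (\<Sum>z\<in>{z\<in>P. x \<subseteq> z \<and> z \<subseteq> y \<and> z \<noteq> y}. mobius_aux P n x z)
      else 0)"

definition mobius :: "'c set set \<Rightarrow> 'c set \<Rightarrow> 'c set \<Rightarrow> 'k::ring_1" where
  "mobius P x y = mobius_aux P (card P) x y"

text \<open>Elements of kSC[I] are coefficient functions on complexes, supported on SC[I].\<close>
definition kSC :: "'a set \<Rightarrow> ('a set set \<Rightarrow> 'k::zero) set" where
  "kSC I = {p. \<forall>\<Gamma>. \<Gamma> \<notin> SC I \<longrightarrow> p \<Gamma> = 0}"

text \<open>Coefficient of the basis tensor A \<otimes> B in Delta_{S,T}(p), where Delta_{S,T} is the
  linear extension of Gamma \<mapsto> Gamma|S \<otimes> Gamma|T.\<close>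
definition Delta_coeff :: "'a set \<Rightarrow> 'a set \<Rightarrow> 'a set \<Rightarrow> ('a set set \<Rightarrow> 'k::comm_monoid_add)
    \<Rightarrow> 'a set set \<Rightarrow> 'a set set \<Rightarrow> 'k" where
  "Delta_coeff I S T p A B = (\<Sum>\<Gamma>\<in>{\<Gamma>\<in>SC I. restr \<Gamma> S = A \<and> restr \<Gamma> T = B}. p \<Gamma>)"

definition primitive :: "'a set \<Rightarrow> ('a set set \<Rightarrow> 'k::comm_monoid_add) \<Rightarrow> bool" where
  "primitive I p \<longleftrightarrow> (\<forall>S T. S \<union> T = I \<and> S \<inter> T = {} \<and> S \<noteq> {} \<and> T \<noteq> {} \<longrightarrow>
      (\<forall>A B. Delta_coeff I S T p A B = 0))"

definition primitives :: "'a set \<Rightarrow> ('a set set \<Rightarrow> 'k::comm_monoid_add) set" where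
  "primitives I = {p \<in> kSC I. primitive I p}"

definition connected_SC :: "'a set \<Rightarrow> 'a set set \<Rightarrow> bool" where
  "connected_SC I \<Gamma> \<longleftrightarrow> \<Gamma> \<in> SC I \<and>
     \<not> (\<exists>S T \<Gamma>1 \<Gamma>2. S \<union> T = I \<and> S \<inter> T = {} \<and> S \<noteq> {} \<and> T \<noteq> {} \<and>
          \<Gamma>1 \<in> SC S \<and> \<Gamma>2 \<in> SC T \<and> \<Gamma> = \<Gamma>1 \<union> \<Gamma>2)"

definition omega :: "'a set \<Rightarrow> 'a set set \<Rightarrow> ('a set set \<Rightarrow> 'k::ring_1)" where
  "omega I \<Gamma> = (\<lambda>\<Phi>. if \<Phi> \<in> SC I \<and> \<Phi> \<subseteq> \<Gamma> then mobius (SC I) \<Phi> \<Gamma> else 0)"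

definition fscale :: "'k::times \<Rightarrow> ('b \<Rightarrow> 'k) \<Rightarrow> ('b \<Rightarrow> 'k)" where
  "fscale c f = (\<lambda>x. c * f x)"

end

theory Submission
  imports Defs
begin

definition gm :: "'a set set \<Rightarrow> 'a set set \<Rightarrow> 'k::ring_1" where
  "gm x y = (if x \<subseteq> y \<and> (\<forall>Y\<in>y-x. \<forall>Z. Z \<subset> Y \<longrightarrow> Z \<in> x) then (-1)^card(y-x) else 0)"

lemma SC_finite: "finite I \<Longrightarrow> finite (SC I)"
  by (rule finite_subset[of _ "Pow (Pow I)"]) (auto simp: SC_def)

lemma SC_elem_finite: "finite I \<Longrightarrow> y \<in> SC I \<Longrightarrow> finite y"
  by (rule finite_subset[of _ "Pow I"]) (auto simp: SC_def)

lemma card_le_SC: assumes "finite I" "y \<in> SC I" shows "card y \<le> card (SC I)"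
proof -
  have "card y \<le> card (Pow I)" using assms by (intro card_mono) (auto simp: SC_def)
  also have "card (Pow I) \<le> card (SC I)"
  proof (rule card_inj_on_le[of Pow])
    show "inj_on Pow (Pow I)" by (auto simp: inj_on_def)
    show "Pow ` Pow I \<subseteq> SC I" by (auto simp: SC_def)
    show "finite (SC I)" using assms SC_finite by blast
  qed
  finally show ?thesis .
qed

lemma alt_sum_Pow:
  assumes "finite N" "a \<in> N"
  shows "(\<Sum>A\<in>Pow N. (-1::'k::ring_1)^card A) = 0"
proof -
  define M where "M = N - {a}"
  have N: "N = insert a M" "a \<notin> M" "finite M" using assms by (auto simp: M_def)
  have d: "Pow M \<inter> insert a ` Pow M = {}" using N by auto
  have inj: "inj_on (insert a) (Pow M)" using N by (auto simp: inj_on_def)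
  have "(\<Sum>A\<in>Pow N. (-1::'k)^card A) = (\<Sum>A\<in>Pow M. (-1::'k)^card A) + (\<Sum>A\<in>insert a ` Pow M. (-1::'k)^card A)"
    unfolding N(1) Pow_insert using N d by (intro sum.union_disjoint) auto
  also have "(\<Sum>A\<in>insert a ` Pow M. (-1::'k)^card A) = (\<Sum>A\<in>Pow M. (-1::'k)^card (insert a A))"
    using inj by (simp add: sum.reindex)
  also have "\<dots> = (\<Sum>A\<in>Pow M. - ((-1::'k)^card A))"
  proof (rule sum.cong[OF refl])
    fix A assume "A \<in> Pow M"
    then have "finite A" "a \<notin> A" using N finite_subset by auto
    then show "(-1::'k)^card (insert a A) = - ((-1::'k)^card A)" by simp
  qed
  finally show ?thesis by (simp add: sum_negf)
qed

lemma comb: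
  assumes "finite I" "x \<in> SC I" "y \<in> SC I" "x \<subseteq> y"
  shows "(\<Sum>z\<in>{z\<in>SC I. x \<subseteq> z \<and> z \<subseteq> y}. (gm x z :: 'k::ring_1)) = (if x = y then 1 else 0)"
proof -
  define N where "N = {Y\<in>y-x. \<forall>Z. Z \<subset> Y \<longrightarrow> Z \<in> x}"
  have fy: "finite y" using assms SC_elem_finite by blast
  have fN: "finite N" using fy by (auto simp: N_def)
  have xd: "\<And>X Y. X \<in> x \<Longrightarrow> Y \<subseteq> X \<Longrightarrow> Y \<in> x" using assms(2) by (auto simp: SC_def)
  have yd: "\<And>X Y. X \<in> y \<Longrightarrow> Y \<subseteq> X \<Longrightarrow> Y \<in> y" using assms(3) by (auto simp: SC_def)
  have yP: "y \<subseteq> Pow I" using assms(3) by (auto simp: SC_def)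
  have sub: "(\<lambda>A. x \<union> A) ` Pow N \<subseteq> {z\<in>SC I. x \<subseteq> z \<and> z \<subseteq> y}"
  proof
    fix z assume "z \<in> (\<lambda>A. x \<union> A) ` Pow N"
    then obtain A where A: "A \<subseteq> N" "z = x \<union> A" by auto
    have "z \<in> SC I"
    proof -
      have "z \<subseteq> Pow I" using A yP assms(4) by (auto simp: N_def)
      moreover have "\<forall>X\<in>z. \<forall>Y. Y \<subseteq> X \<longrightarrow> Y \<in> z"
      proof (intro ballI allI impI)
        fix X Y assume "X \<in> z" "Y \<subseteq> X"
        then show "Y \<in> z" using A xd unfolding N_def by (cases "Y = X") auto
      qed
      ultimately show ?thesis unfolding SC_def by blast
    qed
    then show "z \<in> {z\<in>SC I. x \<subseteq> z \<and> z \<subseteq> y}" using A assms(4) by (auto simp: N_def)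
  qed
  have "(\<Sum>z\<in>{z\<in>SC I. x \<subseteq> z \<and> z \<subseteq> y}. (gm x z :: 'k)) = (\<Sum>z\<in>(\<lambda>A. x \<union> A) ` Pow N. gm x z)"
  proof (rule sum.mono_neutral_right)
    show "finite {z\<in>SC I. x \<subseteq> z \<and> z \<subseteq> y}" by (rule finite_subset[OF _ SC_finite[OF assms(1)]]) auto
    show "(\<lambda>A. x \<union> A) ` Pow N \<subseteq> {z\<in>SC I. x \<subseteq> z \<and> z \<subseteq> y}" by (rule sub)
    show "\<forall>i\<in>{z\<in>SC I. x \<subseteq> z \<and> z \<subseteq> y} - (\<lambda>A. x \<union> A) ` Pow N. (gm x i :: 'k) = 0"
    proof
      fix z assume z: "z \<in> {z\<in>SC I. x \<subseteq> z \<and> z \<subseteq> y} - (\<lambda>A. x \<union> A) ` Pow N"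
      show "(gm x z :: 'k) = 0"
      proof (rule ccontr)
        assume "(gm x z :: 'k) \<noteq> 0"
        then have c: "\<forall>Y\<in>z-x. \<forall>Z. Z \<subset> Y \<longrightarrow> Z \<in> x" by (auto simp: gm_def split: if_splits)
        have "z - x \<in> Pow N" using c z by (auto simp: N_def)
        moreover have "z = x \<union> (z - x)" using z by auto
        ultimately show False using z by blast
      qed
    qed
  qed
  also have "\<dots> = (\<Sum>A\<in>Pow N. gm x (x \<union> A))"
    by (rule sum.reindex_cong[where l="\<lambda>A. x \<union> A"]) (auto simp: inj_on_def N_def)
  also have "\<dots> = (\<Sum>A\<in>Pow N. (-1::'k)^card A)"
  proof (rule sum.cong[OF refl])
    fix A assume "A \<in> Pow N"
    then have "x \<union> A - x = A" by (auto simp: N_def)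
    then show "gm x (x \<union> A) = (-1::'k)^card A" using \<open>A \<in> Pow N\<close> by (auto simp: gm_def N_def)
  qed
  also have "\<dots> = (if x = y then 1 else 0)"
  proof (cases "x = y")
    case True then have "N = {}" by (auto simp: N_def)
    then show ?thesis using True by simp
  next
    case False
    then have ne: "y - x \<noteq> {}" using assms(4) by auto
    have "finite (y - x)" using fy by auto
    from finite_has_minimal[OF this ne] obtain Y where Y: "Y \<in> y - x" "\<forall>b\<in>y-x. b \<subseteq> Y \<longrightarrow> Y = b" by auto
    have "\<forall>Z. Z \<subset> Y \<longrightarrow> Z \<in> x"
    proof (intro allI impI)
      fix Z assume "Z \<subset> Y" 
      then show "Z \<in> x" using Y yd[of Y Z] by auto
    qed
    then have "Y \<in> N" using Y by (auto simp: N_def)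
    then show ?thesis using False alt_sum_Pow[OF fN] by auto
  qed
  finally show ?thesis .
qed

lemma mobius_aux_gm:
  assumes "finite I" "x \<in> SC I"
  shows "y \<in> SC I \<Longrightarrow> card (y - x) \<le> n \<Longrightarrow> mobius_aux (SC I) n x y = (gm x y :: 'k::ring_1)"
proof (induction n arbitrary: y)
  case 0
  have "finite y" using 0 assms SC_elem_finite by blast
  then have "y \<subseteq> x" using 0 by auto
  then show ?case by (auto simp: gm_def)
next
  case (Suc n)
  have fy: "finite y" using Suc assms SC_elem_finite by blast
  show ?case
  proof (cases "x = y")
    case True then show ?thesis by (simp add: gm_def)
  next
    case False
    show ?thesis
    proof (cases "x \<subseteq> y")
      case xy: True
      have "(\<Sum>z\<in>{z\<in>SC I. x \<subseteq> z \<and> z \<subseteq> y \<and> z \<noteq> y}. mobius_aux (SC I) n x z :: 'k)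
          = (\<Sum>z\<in>{z\<in>SC I. x \<subseteq> z \<and> z \<subseteq> y \<and> z \<noteq> y}. gm x z)"
      proof (rule sum.cong[OF refl])
        fix z assume z: "z \<in> {z\<in>SC I. x \<subseteq> z \<and> z \<subseteq> y \<and> z \<noteq> y}"
        have "z - x \<subset> y - x" using z by auto
        then have "card (z - x) < card (y - x)" using fy by (intro psubset_card_mono) auto
        then have "card (z - x) \<le> n" using Suc.prems(2) by linarith
        then show "mobius_aux (SC I) n x z = (gm x z :: 'k)" using Suc.IH[of z] z by simp
      qed
      moreover have "{z\<in>SC I. x \<subseteq> z \<and> z \<subseteq> y} = insert y {z\<in>SC I. x \<subseteq> z \<and> z \<subseteq> y \<and> z \<noteq> y}"
        using Suc xy by auto
      moreover have "finite {z\<in>SC I. x \<subseteq> z \<and> z \<subseteq> y \<and> z \<noteq> y}" by (rule finite_subset[OF _ SC_finite[OF assms(1)]]) auto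
      ultimately have "(gm x y :: 'k) + (\<Sum>z\<in>{z\<in>SC I. x \<subseteq> z \<and> z \<subseteq> y \<and> z \<noteq> y}. mobius_aux (SC I) n x z) = 0"
        using comb[OF assms Suc.prems(1) xy, where 'k='k] False by simp
      then have "(gm x y :: 'k) = - (\<Sum>z\<in>{z\<in>SC I. x \<subseteq> z \<and> z \<subseteq> y \<and> z \<noteq> y}. mobius_aux (SC I) n x z)"
        by (simp only: eq_neg_iff_add_eq_0)
      then show ?thesis using False xy by simp
    next
      case nxy: False
      then show ?thesis by (auto simp: gm_def)
    qed
  qed
qed

lemma mobius_gm:
  assumes "finite I" "x \<in> SC I" "y \<in> SC I"
  shows "mobius (SC I) x y = (gm x y :: 'k::ring_1)"
  unfolding mobius_def
proof (rule mobius_aux_gm[OF assms])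
  have "card (y - x) \<le> card y" using SC_elem_finite assms by (intro card_mono) auto
  also have "\<dots> \<le> card (SC I)" using card_le_SC assms by blast
  finally show "card (y - x) \<le> card (SC I)" .
qed

lemma omega_eq:
  assumes "finite I" "\<Gamma> \<in> SC I"
  shows "(omega I \<Gamma> :: _ \<Rightarrow> 'k::ring_1) \<Phi> = (if \<Phi> \<in> SC I then gm \<Phi> \<Gamma> else 0)"
proof (cases "\<Phi> \<in> SC I \<and> \<Phi> \<subseteq> \<Gamma>")
  case True
  then show ?thesis using mobius_gm[OF assms(1) _ assms(2), of \<Phi>] by (simp add: omega_def)
next
  case False
  then show ?thesis by (auto simp: omega_def gm_def)
qed

lemma conn_max_face:
  assumes "finite I" "connected_SC I \<Gamma>" "S \<union> T = I" "S \<inter> T = {}" "S \<noteq> {}" "T \<noteq> {}"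
  obtains X where "X \<in> \<Gamma>" "\<forall>b\<in>\<Gamma>. X \<subseteq> b \<longrightarrow> X = b" "\<not> X \<subseteq> S" "\<not> X \<subseteq> T"
proof -
  have G: "\<Gamma> \<in> SC I" using assms(2) by (simp add: connected_SC_def)
  have "\<exists>X0\<in>\<Gamma>. \<not> X0 \<subseteq> S \<and> \<not> X0 \<subseteq> T"
  proof (rule ccontr)
    assume "\<not> ?thesis"
    then have all: "\<forall>X\<in>\<Gamma>. X \<subseteq> S \<or> X \<subseteq> T" by blast
    have "restr \<Gamma> S \<in> SC S" "restr \<Gamma> T \<in> SC T" using G by (auto simp: SC_def restr_def)
    moreover have "\<Gamma> = restr \<Gamma> S \<union> restr \<Gamma> T" using all by (auto simp: restr_def)
    ultimately show False using assms(2-6) unfolding connected_SC_def by blast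
  qed
  then obtain X0 where X0: "X0 \<in> \<Gamma>" "\<not> X0 \<subseteq> S" "\<not> X0 \<subseteq> T" by blast
  have "finite \<Gamma>" using SC_elem_finite[OF assms(1) G] .
  from finite_has_maximal2[OF this X0(1)] obtain X where
    "X \<in> \<Gamma>" "X0 \<subseteq> X" "\<forall>b\<in>\<Gamma>. X \<subseteq> b \<longrightarrow> X = b" by blast
  then show ?thesis using that X0 by blast
qed

lemma omega_primitive:
  assumes fI: "finite I" and C: "connected_SC I \<Gamma>"
  shows "primitive I (omega I \<Gamma> :: 'a set set \<Rightarrow> 'k::ring_1)"
  unfolding primitive_def
proof (intro allI impI)
  fix S T A B assume sp: "S \<union> T = I \<and> S \<inter> T = {} \<and> S \<noteq> {} \<and> T \<noteq> {}"
  have G: "\<Gamma> \<in> SC I" using C by (simp add: connected_SC_def)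
  have fG: "finite \<Gamma>" using SC_elem_finite[OF fI G] .
  have GP: "\<Gamma> \<subseteq> Pow I" using G by (auto simp: SC_def)
  obtain X where X: "X \<in> \<Gamma>" "\<forall>b\<in>\<Gamma>. X \<subseteq> b \<longrightarrow> X = b" "\<not> X \<subseteq> S" "\<not> X \<subseteq> T"
    using conn_max_face[OF fI C] sp by blast
  define w where "w = (omega I \<Gamma> :: 'a set set \<Rightarrow> 'k)"
  have wE: "\<And>\<Phi>. w \<Phi> = (if \<Phi> \<in> SC I then gm \<Phi> \<Gamma> else 0)"
    unfolding w_def by (rule omega_eq[OF fI G])
  have dc: "\<And>\<Phi> Y Z. \<Phi> \<in> SC I \<Longrightarrow> Y \<in> \<Phi> \<Longrightarrow> Z \<subseteq> Y \<Longrightarrow> Z \<in> \<Phi>" by (auto simp: SC_def)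
  have rem_SC: "\<Phi> - {X} \<in> SC I" if "\<Phi> \<in> SC I" "\<Phi> \<subseteq> \<Gamma>" for \<Phi>
  proof -
    have "\<Phi> - {X} \<subseteq> Pow I" using that by (auto simp: SC_def)
    moreover have "\<forall>Y\<in>\<Phi> - {X}. \<forall>Z. Z \<subseteq> Y \<longrightarrow> Z \<in> \<Phi> - {X}"
    proof (intro ballI allI impI)
      fix Y Z
      assume YZ: "Y \<in> \<Phi> - {X}" "Z \<subseteq> Y"
      have "Z \<in> \<Phi>" using dc[OF that(1)] YZ by blast
      moreover have "Z \<noteq> X"
      proof
        assume "Z = X"
        then have "X \<subseteq> Y" "Y \<in> \<Gamma>" using YZ that(2) by auto
        then show False using X(2) YZ by blast
      qed
      ultimately show "Z \<in> \<Phi> - {X}" by blast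
    qed
    ultimately show ?thesis unfolding SC_def by blast
  qed
  have K1: "w \<Phi> = - w (\<Phi> - {X})" if "\<Phi> \<in> SC I" "X \<in> \<Phi>" for \<Phi>
  proof (cases "\<Phi> \<subseteq> \<Gamma>")
    case False
    then have "\<not> \<Phi> - {X} \<subseteq> \<Gamma>" using X(1) by blast
    then show ?thesis using False by (simp add: wE gm_def)
  next
    case True
    have R: "\<Phi> - {X} \<in> SC I" using rem_SC[OF that(1) True] .
    have e: "\<Gamma> - (\<Phi> - {X}) = insert X (\<Gamma> - \<Phi>)" "X \<notin> \<Gamma> - \<Phi>" using X(1) that by auto
    have cd: "(\<forall>Y\<in>\<Gamma> - \<Phi>. \<forall>Z. Z \<subset> Y \<longrightarrow> Z \<in> \<Phi>) \<longleftrightarrow>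
              (\<forall>Y\<in>\<Gamma> - (\<Phi> - {X}). \<forall>Z. Z \<subset> Y \<longrightarrow> Z \<in> \<Phi> - {X})"
    proof
      assume h: "\<forall>Y\<in>\<Gamma> - \<Phi>. \<forall>Z. Z \<subset> Y \<longrightarrow> Z \<in> \<Phi>"
      show "\<forall>Y\<in>\<Gamma> - (\<Phi> - {X}). \<forall>Z. Z \<subset> Y \<longrightarrow> Z \<in> \<Phi> - {X}"
      proof (intro ballI allI impI)
        fix Y Z assume Y: "Y \<in> \<Gamma> - (\<Phi> - {X})" "Z \<subset> Y"
        show "Z \<in> \<Phi> - {X}"
        proof (cases "Y = X")
          case True then show ?thesis using Y dc[OF that(1) that(2), of Z] by auto
        next
          case False
          then have "Y \<in> \<Gamma> - \<Phi>" using Y by auto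
          then have "Z \<in> \<Phi>" using h Y by auto
          moreover have "Z \<noteq> X" using X(2) Y \<open>Y \<in> \<Gamma> - \<Phi>\<close> by blast
          ultimately show ?thesis by auto
        qed
      qed
    next
      assume h: "\<forall>Y\<in>\<Gamma> - (\<Phi> - {X}). \<forall>Z. Z \<subset> Y \<longrightarrow> Z \<in> \<Phi> - {X}"
      show "\<forall>Y\<in>\<Gamma> - \<Phi>. \<forall>Z. Z \<subset> Y \<longrightarrow> Z \<in> \<Phi>"
      proof (intro ballI allI impI)
        fix Y Z assume "Y \<in> \<Gamma> - \<Phi>" "Z \<subset> Y"
        then have "Y \<in> \<Gamma> - (\<Phi> - {X})" by blast
        then show "Z \<in> \<Phi>" using h \<open>Z \<subset> Y\<close> by blast
      qed
    qed
    have cc: "card (\<Gamma> - (\<Phi> - {X})) = Suc (card (\<Gamma> - \<Phi>))" using e fG by simp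
    have w1: "w \<Phi> = gm \<Phi> \<Gamma>" "w (\<Phi> - {X}) = gm (\<Phi> - {X}) \<Gamma>"
      using that(1) R by (simp_all only: wE if_True)
    show ?thesis
    proof (cases "\<forall>Y\<in>\<Gamma> - \<Phi>. \<forall>Z. Z \<subset> Y \<longrightarrow> Z \<in> \<Phi>")
      case c: True
      have c2: "\<forall>Y\<in>\<Gamma> - (\<Phi> - {X}). \<forall>Z. Z \<subset> Y \<longrightarrow> Z \<in> \<Phi> - {X}" using c cd by blast
      have "gm \<Phi> \<Gamma> = ((-1::'k)^card(\<Gamma>-\<Phi>))" unfolding gm_def by (rule if_P) (use True c in blast)
      moreover have "gm (\<Phi> - {X}) \<Gamma> = ((-1::'k)^card(\<Gamma>-(\<Phi> - {X})))" unfolding gm_def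
        by (rule if_P) (use True c2 in blast)
      ultimately show ?thesis using w1 cc by simp
    next
      case c: False
      have c2: "\<not> (\<forall>Y\<in>\<Gamma> - (\<Phi> - {X}). \<forall>Z. Z \<subset> Y \<longrightarrow> Z \<in> \<Phi> - {X})" using c cd by blast
      have "gm \<Phi> \<Gamma> = (0::'k)" unfolding gm_def by (rule if_not_P) (use c in blast)
      moreover have "gm (\<Phi> - {X}) \<Gamma> = (0::'k)" unfolding gm_def
        by (rule if_not_P) (use c2 in blast)
      ultimately show ?thesis using w1 by simp
    qed
  qed
  have K2: "insert X \<Phi> \<in> SC I" if "\<Phi> \<in> SC I" "X \<notin> \<Phi>" "w \<Phi> \<noteq> 0" for \<Phi>
  proof -
    have h: "\<Phi> \<subseteq> \<Gamma>" "\<forall>Y\<in>\<Gamma> - \<Phi>. \<forall>Z. Z \<subset> Y \<longrightarrow> Z \<in> \<Phi>"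
      using that by (auto simp: wE gm_def split: if_splits)
    have "insert X \<Phi> \<subseteq> Pow I" using that X(1) GP by (auto simp: SC_def)
    moreover have "\<forall>Y\<in>insert X \<Phi>. \<forall>Z. Z \<subseteq> Y \<longrightarrow> Z \<in> insert X \<Phi>"
    proof (intro ballI allI impI)
      fix Y Z assume Y: "Y \<in> insert X \<Phi>" "Z \<subseteq> Y"
      show "Z \<in> insert X \<Phi>"
      proof (cases "Y = X")
        case True
        then show ?thesis using h(2) X(1) that(2) Y by (cases "Z = X") auto
      next
        case False then show ?thesis using Y dc[OF that(1)] by auto
      qed
    qed
    ultimately show ?thesis unfolding SC_def by blast
  qed
  have rS: "\<And>\<Phi>. restr (\<Phi> - {X}) S = restr \<Phi> S" "\<And>\<Phi>. restr (\<Phi> - {X}) T = restr \<Phi> T"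
    "\<And>\<Phi>. restr (insert X \<Phi>) S = restr \<Phi> S" "\<And>\<Phi>. restr (insert X \<Phi>) T = restr \<Phi> T"
    using X(3,4) by (auto simp: restr_def)
  define D where "D = {\<Phi>\<in>SC I. restr \<Phi> S = A \<and> restr \<Phi> T = B}"
  define D1 where "D1 = {\<Phi>\<in>D. X \<notin> \<Phi>}"
  define D2 where "D2 = {\<Phi>\<in>D. X \<in> \<Phi>}"
  define D2' where "D2' = {\<Phi>\<in>D2. \<Phi> \<subseteq> \<Gamma>}"
  have fD: "finite D" unfolding D_def by (rule finite_subset[OF _ SC_finite[OF fI]]) auto
  have "sum w D = sum w D1 + sum w D2"
  proof -
    have "D = D1 \<union> D2" "D1 \<inter> D2 = {}" by (auto simp: D1_def D2_def)
    moreover have "finite D1" "finite D2" using fD by (auto simp: D1_def D2_def)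
    ultimately show ?thesis by (simp add: sum.union_disjoint)
  qed
  also have "sum w D2 = sum w D2'"
  proof (rule sum.mono_neutral_right)
    show "finite D2" using fD by (simp add: D2_def)
    show "D2' \<subseteq> D2" by (auto simp: D2'_def)
    show "\<forall>i\<in>D2 - D2'. w i = 0" by (auto simp: D2'_def wE gm_def)
  qed
  also have "sum w D2' = (\<Sum>\<Phi>\<in>D2'. - w (\<Phi> - {X}))"
    by (rule sum.cong[OF refl]) (rule K1, auto simp: D2'_def D2_def D_def)
  also have "\<dots> = - sum w ((\<lambda>\<Phi>. \<Phi> - {X}) ` D2')"
  proof -
    have "inj_on (\<lambda>\<Phi>. \<Phi> - {X}) D2'"
    proof (rule inj_onI)
      fix a b assume ab: "a \<in> D2'" "b \<in> D2'" "a - {X} = b - {X}"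
      then have "X \<in> a" "X \<in> b" by (auto simp: D2'_def D2_def)
      then have "a = insert X (a - {X})" "b = insert X (b - {X})" by auto
      then show "a = b" using ab(3) by metis
    qed
    then show ?thesis by (simp add: sum.reindex sum_negf)
  qed
  also have "sum w D1 = sum w ((\<lambda>\<Phi>. \<Phi> - {X}) ` D2')"
  proof (rule sym, rule sum.mono_neutral_left)
    show "finite D1" using fD by (simp add: D1_def)
    show "(\<lambda>\<Phi>. \<Phi> - {X}) ` D2' \<subseteq> D1"
    proof
      fix \<Psi> assume "\<Psi> \<in> (\<lambda>\<Phi>. \<Phi> - {X}) ` D2'"
      then obtain \<Phi> where P: "\<Phi> \<in> D2'" "\<Psi> = \<Phi> - {X}" by blast
      then have P1: "\<Phi> \<in> SC I" "\<Phi> \<subseteq> \<Gamma>" "restr \<Phi> S = A" "restr \<Phi> T = B"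
        by (auto simp: D2'_def D2_def D_def)
      have "\<Psi> \<in> SC I" using rem_SC[OF P1(1,2)] P(2) by simp
      moreover have "restr \<Psi> S = A" "restr \<Psi> T = B" using P(2) P1 rS(1,2) by simp_all
      ultimately show "\<Psi> \<in> D1" using P(2) by (simp add: D1_def D_def)
    qed
    show "\<forall>i\<in>D1 - (\<lambda>\<Phi>. \<Phi> - {X}) ` D2'. w i = 0"
    proof (rule ballI, rule ccontr)
      fix \<Phi> assume P: "\<Phi> \<in> D1 - (\<lambda>\<Phi>. \<Phi> - {X}) ` D2'" and nz: "w \<Phi> \<noteq> 0"
      have P1: "\<Phi> \<in> SC I" "X \<notin> \<Phi>" "restr \<Phi> S = A" "restr \<Phi> T = B" using P by (auto simp: D1_def D_def)
      have "\<Phi> \<subseteq> \<Gamma>" using nz P1 by (auto simp: wE gm_def split: if_splits)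
      then have "insert X \<Phi> \<in> D2'" using K2[OF P1(1,2) nz] P1 rS X(1)
        by (auto simp: D2'_def D2_def D_def)
      moreover have "\<Phi> = insert X \<Phi> - {X}" using P1 by auto
      ultimately show False using P by blast
    qed
  qed
  finally have "sum w D = 0" by simp
  then show "Delta_coeff I S T (omega I \<Gamma>) A B = (0::'k)"
    unfolding Delta_coeff_def D_def w_def by simp
qed

lemma module_fscale: "module (fscale :: 'k::comm_ring_1 \<Rightarrow> ('b \<Rightarrow> 'k) \<Rightarrow> ('b \<Rightarrow> 'k))"
  by standard (auto simp: fscale_def algebra_simps fun_eq_iff)

lemma sum_fun_apply: "(sum f A) x = (\<Sum>a\<in>A. f a x)"
  by (induction A rule: infinite_finite_induct) auto

lemma omega_self: "finite I \<Longrightarrow> \<Gamma> \<in> SC I \<Longrightarrow> (omega I \<Gamma> :: _ \<Rightarrow> 'k::ring_1) \<Gamma> = 1"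
  by (simp add: omega_eq gm_def)

lemma omega_supp: "finite I \<Longrightarrow> \<Gamma> \<in> SC I \<Longrightarrow> (omega I \<Gamma> :: _ \<Rightarrow> 'k::ring_1) \<Phi> \<noteq> 0 \<Longrightarrow> \<Phi> \<subseteq> \<Gamma>"
  by (simp add: omega_eq gm_def split: if_splits)

lemma omega_prim: "finite I \<Longrightarrow> connected_SC I \<Gamma> \<Longrightarrow> (omega I \<Gamma> :: _ \<Rightarrow> 'k::ring_1) \<in> primitives I"
  unfolding primitives_def using omega_primitive[of I \<Gamma>]
  by (auto simp: kSC_def omega_def)

lemma primitives_subspace:
  "module.subspace fscale (primitives I :: ('a set set \<Rightarrow> 'k::comm_ring_1) set)"
proof -
  interpret m: module "fscale :: 'k \<Rightarrow> ('a set set \<Rightarrow> 'k) \<Rightarrow> _" by (rule module_fscale)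
  show ?thesis
    unfolding m.subspace_def
  proof (intro conjI ballI allI)
    show "0 \<in> (primitives I :: ('a set set \<Rightarrow> 'k) set)"
      by (simp add: primitives_def kSC_def primitive_def Delta_coeff_def)
    fix p q :: "'a set set \<Rightarrow> 'k" assume p: "p \<in> primitives I" and q: "q \<in> primitives I"
    show "p + q \<in> primitives I"
      using p q by (auto simp: primitives_def kSC_def primitive_def Delta_coeff_def sum.distrib)
  next
    fix c :: 'k and p :: "'a set set \<Rightarrow> 'k" assume p: "p \<in> primitives I"
    show "fscale c p \<in> primitives I"
      using p by (auto simp: primitives_def kSC_def primitive_def Delta_coeff_def fscale_def
          simp flip: sum_distrib_left)
  qed
qed

lemma inner_sum:
  assumes "finite I" "\<Psi> \<in> SC I" "\<Phi> \<in> SC I"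
  shows "(\<Sum>\<Gamma>\<in>SC I. if \<Gamma> \<subseteq> \<Phi> then gm \<Psi> \<Gamma> else 0) = (if \<Psi> = \<Phi> then 1 else (0::'k::ring_1))"
proof -
  have "(\<Sum>\<Gamma>\<in>SC I. if \<Gamma> \<subseteq> \<Phi> then gm \<Psi> \<Gamma> else 0)
      = (\<Sum>\<Gamma>\<in>SC I. if \<Psi> \<subseteq> \<Gamma> \<and> \<Gamma> \<subseteq> \<Phi> then gm \<Psi> \<Gamma> else (0::'k))"
    by (rule sum.cong[OF refl]) (auto simp: gm_def)
  also have "\<dots> = (\<Sum>\<Gamma>\<in>{\<Gamma>\<in>SC I. \<Psi> \<subseteq> \<Gamma> \<and> \<Gamma> \<subseteq> \<Phi>}. gm \<Psi> \<Gamma>)"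
    using SC_finite[OF assms(1)] by (simp add: sum.inter_filter)
  also have "\<dots> = (if \<Psi> = \<Phi> then 1 else 0)"
  proof (cases "\<Psi> \<subseteq> \<Phi>")
    case True then show ?thesis using comb[OF assms True] by simp
  next
    case False
    then have e: "{\<Gamma>\<in>SC I. \<Psi> \<subseteq> \<Gamma> \<and> \<Gamma> \<subseteq> \<Phi>} = {}" by blast
    have "\<Psi> \<noteq> \<Phi>" using False by blast
    then show ?thesis by (simp only: e sum.empty if_False)
  qed
  finally show ?thesis .
qed

lemma inversion:
  assumes fI: "finite I" and p: "p \<in> kSC I"
  shows "p \<Psi> = (\<Sum>\<Gamma>\<in>SC I. (\<Sum>\<Phi>\<in>SC I. if \<Gamma> \<subseteq> \<Phi> then p \<Phi> else 0) * (omega I \<Gamma> :: _ \<Rightarrow> 'k::comm_ring_1) \<Psi>)"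
proof (cases "\<Psi> \<in> SC I")
  case False
  then show ?thesis using p by (simp add: kSC_def omega_def)
next
  case Psi: True
  have "(\<Sum>\<Gamma>\<in>SC I. (\<Sum>\<Phi>\<in>SC I. if \<Gamma> \<subseteq> \<Phi> then p \<Phi> else 0) * (omega I \<Gamma> :: _ \<Rightarrow> 'k) \<Psi>)
      = (\<Sum>\<Gamma>\<in>SC I. \<Sum>\<Phi>\<in>SC I. p \<Phi> * (if \<Gamma> \<subseteq> \<Phi> then gm \<Psi> \<Gamma> else 0))"
    by (auto simp: omega_eq[OF fI] Psi sum_distrib_right intro!: sum.cong)
  also have "\<dots> = (\<Sum>\<Phi>\<in>SC I. \<Sum>\<Gamma>\<in>SC I. p \<Phi> * (if \<Gamma> \<subseteq> \<Phi> then gm \<Psi> \<Gamma> else 0))"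
    by (rule sum.swap)
  also have "\<dots> = (\<Sum>\<Phi>\<in>SC I. p \<Phi> * (if \<Psi> = \<Phi> then 1 else 0))"
    by (rule sum.cong[OF refl]) (simp add: inner_sum[OF fI Psi] flip: sum_distrib_left)
  also have "\<dots> = p \<Psi>"
    using SC_finite[OF fI] Psi by (simp add: if_distrib cong: if_cong)
  finally show ?thesis by simp
qed

lemma c_zero:
  assumes fI: "finite I" and p: "p \<in> primitives I" and G: "\<Gamma> \<in> SC I" and nc: "\<not> connected_SC I \<Gamma>"
  shows "(\<Sum>\<Phi>\<in>SC I. if \<Gamma> \<subseteq> \<Phi> then p \<Phi> else (0::'k::comm_ring_1)) = 0"
proof -
  obtain S T \<Gamma>1 \<Gamma>2 where st: "S \<union> T = I" "S \<inter> T = {}" "S \<noteq> {}" "T \<noteq> {}"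
    "\<Gamma>1 \<in> SC S" "\<Gamma>2 \<in> SC T" "\<Gamma> = \<Gamma>1 \<union> \<Gamma>2"
    using nc G unfolding connected_SC_def by blast
  have GST: "\<Gamma> \<subseteq> Pow S \<union> Pow T" using st by (auto simp: SC_def)
  have prim: "\<And>A B. Delta_coeff I S T p A B = 0" using p st(1-4) by (auto simp: primitives_def primitive_def)
  define key where "key = (\<lambda>\<Phi>. (restr \<Phi> S, restr \<Phi> T))"
  have cond: "\<And>\<Phi>. \<Gamma> \<subseteq> \<Phi> \<longleftrightarrow> restr \<Gamma> S \<subseteq> fst (key \<Phi>) \<and> restr \<Gamma> T \<subseteq> snd (key \<Phi>)"
    using GST by (auto simp: key_def restr_def)
  have "(\<Sum>\<Phi>\<in>SC I. if \<Gamma> \<subseteq> \<Phi> then p \<Phi> else (0::'k))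
     = (\<Sum>y\<in>key ` SC I. \<Sum>\<Phi>\<in>{\<Phi>\<in>SC I. key \<Phi> = y}. if \<Gamma> \<subseteq> \<Phi> then p \<Phi> else 0)"
    by (rule sum.image_gen[OF SC_finite[OF fI]])
  also have "\<dots> = (\<Sum>y\<in>key ` SC I. 0)"
  proof (rule sum.cong[OF refl])
    fix y assume "y \<in> key ` SC I"
    obtain A B where y: "y = (A, B)" by (cases y)
    have "(\<Sum>\<Phi>\<in>{\<Phi>\<in>SC I. key \<Phi> = y}. if \<Gamma> \<subseteq> \<Phi> then p \<Phi> else 0)
        = (\<Sum>\<Phi>\<in>{\<Phi>\<in>SC I. key \<Phi> = y}. if restr \<Gamma> S \<subseteq> A \<and> restr \<Gamma> T \<subseteq> B then p \<Phi> else (0::'k))"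
      by (rule sum.cong[OF refl]) (simp add: cond y)
    also have "\<dots> = (if restr \<Gamma> S \<subseteq> A \<and> restr \<Gamma> T \<subseteq> B then Delta_coeff I S T p A B else 0)"
    proof (cases "restr \<Gamma> S \<subseteq> A \<and> restr \<Gamma> T \<subseteq> B")
      case True then show ?thesis by (simp add: Delta_coeff_def key_def y)
    next
      case False
      then have z: "\<And>\<Phi>. (if restr \<Gamma> S \<subseteq> A \<and> restr \<Gamma> T \<subseteq> B then p \<Phi> else (0::'k)) = 0"
        by (simp only: if_False)
      show ?thesis by (simp only: z sum.neutral_const if_False False)
    qed
    also have "\<dots> = 0" using prim by simp
    finally show "(\<Sum>\<Phi>\<in>{\<Phi>\<in>SC I. key \<Phi> = y}. if \<Gamma> \<subseteq> \<Phi> then p \<Phi> else 0) = 0" .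
  qed
  finally show ?thesis by simp
qed

lemma omega_indep:
  assumes fI: "finite I" and C: "C \<subseteq> SC I"
  shows "\<not> module.dependent (fscale :: 'k::comm_ring_1 \<Rightarrow> _) ((omega I :: _ \<Rightarrow> _ \<Rightarrow> 'k) ` C)"
proof -
  interpret m: module "fscale :: 'k \<Rightarrow> ('a set set \<Rightarrow> 'k) \<Rightarrow> _" by (rule module_fscale)
  show ?thesis
    unfolding m.dependent_explicit
  proof (intro notI, elim exE conjE bexE)
    fix t u v
    assume ft: "finite t" and tC: "t \<subseteq> (omega I :: _ \<Rightarrow> _ \<Rightarrow> 'k) ` C"
      and s0: "(\<Sum>v\<in>t. fscale (u v) v) = 0" and vt: "v \<in> t" and uv: "u v \<noteq> 0"
    define W where "W = {\<Gamma>\<in>C. (omega I \<Gamma> :: _ \<Rightarrow> 'k) \<in> t \<and> u (omega I \<Gamma>) \<noteq> 0}"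
    have fW: "finite W" using finite_subset[OF C SC_finite[OF fI]] by (simp add: W_def)
    obtain \<Gamma>0 where "\<Gamma>0 \<in> C" "v = omega I \<Gamma>0" using vt tC by blast
    then have "W \<noteq> {}" using vt uv W_def by blast
    from finite_has_maximal[OF fW this] obtain \<Gamma> where
      G: "\<Gamma> \<in> W" "\<forall>b\<in>W. \<Gamma> \<subseteq> b \<longrightarrow> \<Gamma> = b" by blast
    have GSC: "\<Gamma> \<in> SC I" using G C by (auto simp: W_def)
    have "0 = (\<Sum>v\<in>t. fscale (u v) v) \<Gamma>" using s0 by simp
    also have "\<dots> = (\<Sum>v\<in>t. u v * v \<Gamma>)" by (simp add: sum_fun_apply fscale_def)
    also have "\<dots> = u (omega I \<Gamma>) * omega I \<Gamma> \<Gamma> + (\<Sum>v\<in>t - {omega I \<Gamma>}. u v * v \<Gamma>)"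
    proof (rule sum.remove[OF ft])
      show "omega I \<Gamma> \<in> t" using G(1) by (simp add: W_def)
    qed
    also have "(\<Sum>v\<in>t - {omega I \<Gamma>}. u v * v \<Gamma>) = 0"
    proof (rule sum.neutral, rule ballI)
      fix w assume w: "w \<in> t - {omega I \<Gamma>}"
      then obtain \<Gamma>' where G': "\<Gamma>' \<in> C" "w = omega I \<Gamma>'" using tC by blast
      show "u w * w \<Gamma> = 0"
      proof (rule ccontr)
        assume nz: "u w * w \<Gamma> \<noteq> 0"
        then have "u w \<noteq> 0" "w \<Gamma> \<noteq> 0" by auto
        then have "\<Gamma>' \<in> W" "\<Gamma> \<subseteq> \<Gamma>'" using G' w C omega_supp[OF fI, of \<Gamma>' \<Gamma>] by (auto simp: W_def)
        then have "\<Gamma> = \<Gamma>'" using G(2) by blast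
        then show False using w G' by blast
      qed
    qed
    finally have "u (omega I \<Gamma>) = 0" using omega_self[OF fI GSC, where 'k='k] by simp
    then show False using G(1) by (simp add: W_def)
  qed
qed

lemma omega_span:
  assumes fI: "finite I"
  shows "module.span (fscale :: 'k::comm_ring_1 \<Rightarrow> _) ((omega I :: _ \<Rightarrow> _ \<Rightarrow> 'k) ` {\<Gamma>. connected_SC I \<Gamma>}) = primitives I"
proof -
  interpret m: module "fscale :: 'k \<Rightarrow> ('a set set \<Rightarrow> 'k) \<Rightarrow> _" by (rule module_fscale)
  define Conn where "Conn = {\<Gamma>. connected_SC I \<Gamma>}"
  have CS: "Conn \<subseteq> SC I" by (auto simp: Conn_def connected_SC_def)
  have fC: "finite Conn" using finite_subset[OF CS SC_finite[OF fI]] .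
  show ?thesis
    unfolding Conn_def[symmetric]
  proof
    show "m.span ((omega I :: _ \<Rightarrow> _ \<Rightarrow> 'k) ` Conn) \<subseteq> primitives I"
      by (rule m.span_minimal) (use omega_prim[OF fI] primitives_subspace in \<open>auto simp: Conn_def\<close>)
  next
    show "primitives I \<subseteq> m.span ((omega I :: _ \<Rightarrow> _ \<Rightarrow> 'k) ` Conn)"
    proof
      fix p :: "'a set set \<Rightarrow> 'k" assume p: "p \<in> primitives I"
      define c where "c = (\<lambda>\<Gamma>. \<Sum>\<Phi>\<in>SC I. if \<Gamma> \<subseteq> \<Phi> then p \<Phi> else 0)"
      have "p = (\<Sum>\<Gamma>\<in>Conn. fscale (c \<Gamma>) (omega I \<Gamma>))"
      proof
        fix \<Psi>
        have "(\<Sum>\<Gamma>\<in>Conn. fscale (c \<Gamma>) (omega I \<Gamma>)) \<Psi> = (\<Sum>\<Gamma>\<in>Conn. c \<Gamma> * omega I \<Gamma> \<Psi>)"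
          by (simp add: sum_fun_apply fscale_def)
        also have "\<dots> = (\<Sum>\<Gamma>\<in>SC I. c \<Gamma> * omega I \<Gamma> \<Psi>)"
        proof (rule sum.mono_neutral_left[OF SC_finite[OF fI] CS], rule ballI)
          fix \<Gamma> assume "\<Gamma> \<in> SC I - Conn"
          then have "c \<Gamma> = 0" unfolding c_def using c_zero[OF fI p] by (auto simp: Conn_def)
          then show "c \<Gamma> * omega I \<Gamma> \<Psi> = 0" by simp
        qed
        also have "\<dots> = p \<Psi>"
          using inversion[OF fI, of p \<Psi>] p by (simp add: c_def primitives_def)
        finally show "p \<Psi> = (\<Sum>\<Gamma>\<in>Conn. fscale (c \<Gamma>) (omega I \<Gamma>)) \<Psi>" by simp
      qed
      also have "\<dots> \<in> m.span ((omega I :: _ \<Rightarrow> _ \<Rightarrow> 'k) ` Conn)"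
        by (intro m.span_sum m.span_scale m.span_base) auto
      finally show "p \<in> m.span ((omega I :: _ \<Rightarrow> _ \<Rightarrow> 'k) ` Conn)" .
    qed
  qed
qed

theorem mainTheorem18:
  fixes I :: "'a set"
  assumes "finite I"
  defines "Conn \<equiv> {\<Gamma>. connected_SC I \<Gamma>}"
  shows "inj_on (omega I :: 'a set set \<Rightarrow> ('a set set \<Rightarrow> 'k::field_char_0)) Conn
       \<and> omega I ` Conn \<subseteq> primitives I
       \<and> \<not> module.dependent fscale (omega I ` Conn)
       \<and> module.span fscale (omega I ` Conn) = primitives I"
proof (intro conjI)
  have CS: "Conn \<subseteq> SC I" by (auto simp: Conn_def connected_SC_def)
  show "inj_on (omega I :: 'a set set \<Rightarrow> ('a set set \<Rightarrow> 'k::field_char_0)) Conn"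
  proof (rule inj_onI)
    fix a b assume ab: "a \<in> Conn" "b \<in> Conn" "(omega I a :: _ \<Rightarrow> 'k) = omega I b"
    have aS: "a \<in> SC I" and bS: "b \<in> SC I" using ab CS by auto
    have "(omega I b :: _ \<Rightarrow> 'k) a \<noteq> 0" using omega_self[OF assms(1) aS, where 'k='k] ab(3) by simp
    then have "a \<subseteq> b" by (rule omega_supp[OF assms(1) bS])
    moreover have "(omega I a :: _ \<Rightarrow> 'k) b \<noteq> 0" using omega_self[OF assms(1) bS, where 'k='k] ab(3) by simp
    then have "b \<subseteq> a" by (rule omega_supp[OF assms(1) aS])
    ultimately show "a = b" by blast
  qed
  show "omega I ` Conn \<subseteq> primitives I"
    using omega_prim[OF assms(1)] by (auto simp: Conn_def)
  show "\<not> module.dependent fscale (omega I ` Conn)"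
    by (rule omega_indep[OF assms(1) CS])
  show "module.span fscale (omega I ` Conn) = primitives I"
    unfolding Conn_def by (rule omega_span[OF assms(1)])
qed

end
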